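(* In the restricted cut-and-choose setting described in the context (Protocol 1), assume the expected number of test rounds satisfies $N\ge 1$. Let $\varepsilon_H,\varepsilon_D\ge 0$ be such that, for the client input $\psi=|+\rangle\langle+|^{\otimes k}$ and unitary $U=\mathbb{1}_{\mathcal{X}}$, $$F(\rho_H,|+\rangle\langle+|^{\otimes k})\ge 1-\varepsilon_H$$ and, for every $\alpha\in\mathbb{R}$ (with the attack placement fixed as either before or after the delegated unitary), $$\max_{p\in[0,1]}F\big(\rho_D^\alpha,\;p|+\rangle\langle+|^{\otimes k}+(1-p)|\bot\rangle\langle\bot|\big)\ge 1-\varepsilon_D .$$ (These hold in particular whenever the protocol is $\varepsilon_H$-correct and $\varepsilon_D$-secure in the sense of the fidelity-based definition in the context, since the phase attacks are admissible server attacks.) Then $\varepsilon_H+\varepsilon_D\ge \frac{1}{7N}$.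
   Context: Restricted cut-and-choose setting. Fix $k\ge 1$, $\mathcal{X}=\mathbb{C}^{2^k}$, $P(\alpha)=\mathrm{diag}(1,e^{i\alpha})$, $A_\alpha=\mathbb{1}_2^{\otimes(k-1)}\otimes P(\alpha)$, $|+\rangle=(|0\rangle+|1\rangle)/\sqrt2$, $|+_\alpha\rangle=(|0\rangle+e^{i\alpha}|1\rangle)/\sqrt2$. Let $\Omega$ be a probability distribution on $\mathbb{N}=\{0,1,\dots\}$ (number $n$ of test rounds) with finite mean $N=\sum_n n\Omega(n)$. For each $n$ and $i\in\{1,\dots,n+1\}$ there are a test unitary $T_{n,i}\in\mathrm{U}(\mathcal{X})$ and a test input unit vector $|\chi_{n,i}\rangle\in\mathcal{X}$, and for each $n$ an operator $0\le\mu_{k,n}\le\mathbb{1}$ on $\mathcal{X}^{\otimes n}$ (accept outcome). The output round $\ell$ is uniform on $\{1,\dots,n+1\}$, rounds $i\neq\ell$ are test rounds; after all rounds the client measures the $n$ test outputs with $\{\mu_{k,n},\mathbb{1}-\mu_{k,n}\}$, outputs the computation-round output on acceptance and $|\bot\rangle$ otherwise, where $|\bot\rangle$ is a unit vector orthogonal to $\mathcal{X}$ (states live on $\mathcal{X}\oplus\mathbb{C}|\bot\rangle$). The phase attack with parameter $\alpha$ replaces every delegated unitary $T$ by $T^\alpha=TA_\alpha$ (for all rounds) or by $T^\alpha=A_\alpha T$ (for all rounds). Define $p^H_{n,\ell}=\mathrm{Tr}[\mu_{k,n}\bigotimes_{i\ne\ell}T_{n,i}|\chi_{n,i}\rangle\langle\chi_{n,i}|T_{n,i}^\dagger]$,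 $p^D_{n,\ell}$ the same with $T_{n,i}$ replaced by $T^\alpha_{n,i}$, $p_H=\sum_n\frac{\Omega(n)}{n+1}\sum_{\ell=1}^{n+1}p^H_{n,\ell}$, $p^\alpha_D=\sum_n\frac{\Omega(n)}{n+1}\sum_{\ell=1}^{n+1}p^D_{n,\ell}$. For input $|+\rangle\langle+|^{\otimes k}$ and $U=\mathbb{1}$, the client's output states are $\rho_H=p_H|+\rangle\langle+|^{\otimes k}+(1-p_H)|\bot\rangle\langle\bot|$ (honest server) and $\rho^\alpha_D=p^\alpha_D|+\rangle\langle+|^{\otimes (k-1)}\otimes|+_\alpha\rangle\langle+_\alpha|+(1-p^\alpha_D)|\bot\rangle\langle\bot|$ (phase attack). Fidelity: $F(\rho,\sigma)=\big(\mathrm{Tr}\sqrt{\sqrt\rho\,\sigma\sqrt\rho}\big)^2$. Fidelity-based definition: a protocol is $\varepsilon_H$-correct and $\varepsilon_D$-secure if for every input $\psi$ and unitary $U$, the honest output $\rho_H$ satisfies $F(\rho_H,U\psi U^\dagger)\ge1-\varepsilon_H$, and for every server attack the output $\rho_D$ satisfies $\max_{p\in[0,1]}F(\rho_D,pU\psi U^\dagger+(1-p)|\bot\rangle\langle\bot|)\ge1-\varepsilon_D$. *)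

theory Defs
  imports Complex_Main "Jordan_Normal_Form.Matrix"
begin

definition dag :: "complex mat \<Rightarrow> complex mat" where
  "dag A = mat (dim_col A) (dim_row A) (\<lambda>(i,j). cnj (A $$ (j,i)))"

definition mtrace :: "complex mat \<Rightarrow> complex" where
  "mtrace A = (\<Sum>i<dim_row A. A $$ (i,i))"

definition cinner :: "complex vec \<Rightarrow> complex vec \<Rightarrow> complex" where
  "cinner v w = (\<Sum>i<dim_vec v. cnj (v $ i) * w $ i)"

definition is_unitary :: "nat \<Rightarrow> complex mat \<Rightarrow> bool" where
  "is_unitary d U \<longleftrightarrow> U \<in> carrier_mat d d \<and> dag U * U = 1\<^sub>m d \<and> U * dag U = 1\<^sub>m d"

definition is_unit_vec :: "nat \<Rightarrow> complex vec \<Rightarrow> bool" where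
  "is_unit_vec d v \<longleftrightarrow> v \<in> carrier_vec d \<and> cinner v v = 1"

definition psd :: "nat \<Rightarrow> complex mat \<Rightarrow> bool" where
  "psd d A \<longleftrightarrow> A \<in> carrier_mat d d \<and> dag A = A \<and>
     (\<forall>v \<in> carrier_vec d. Im (cinner v (A *\<^sub>v v)) = 0 \<and> Re (cinner v (A *\<^sub>v v)) \<ge> 0)"

definition effect :: "nat \<Rightarrow> complex mat \<Rightarrow> bool" where
  "effect d M \<longleftrightarrow> psd d M \<and> psd d (1\<^sub>m d - M)"

definition sqrtm :: "complex mat \<Rightarrow> complex mat" where
  "sqrtm A = (THE B. psd (dim_row A) B \<and> B * B = A)"

definition fidelity :: "complex mat \<Rightarrow> complex mat \<Rightarrow> real" where
  "fidelity \<rho> \<sigma> = (Re (mtrace (sqrtm (sqrtm \<rho> * \<sigma> * sqrtm \<rho>))))\<^sup>2"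

definition ketbra :: "complex vec \<Rightarrow> complex mat" where
  "ketbra v = mat (dim_vec v) (dim_vec v) (\<lambda>(i,j). v $ i * cnj (v $ j))"

text \<open>Kronecker (tensor) product; index i of A \<otimes> B is (i div dim B, i mod dim B)\<close>
definition kron :: "complex mat \<Rightarrow> complex mat \<Rightarrow> complex mat" where
  "kron A B = mat (dim_row A * dim_row B) (dim_col A * dim_col B)
     (\<lambda>(i,j). A $$ (i div dim_row B, j div dim_col B) * B $$ (i mod dim_row B, j mod dim_col B))"

definition kron_list :: "complex mat list \<Rightarrow> complex mat" where
  "kron_list As = foldr kron As (1\<^sub>m 1)"

definition Pgate :: "real \<Rightarrow> complex mat" where
  "Pgate \<alpha> = mat 2 2 (\<lambda>(i,j). if i = j then (if i = 0 then 1 else cis \<alpha>) else 0)"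

definition Aphase :: "nat \<Rightarrow> real \<Rightarrow> complex mat" where
  "Aphase k \<alpha> = kron (1\<^sub>m (2^(k-1))) (Pgate \<alpha>)"

definition plus_a :: "real \<Rightarrow> complex vec" where
  "plus_a \<alpha> = vec 2 (\<lambda>i. if i = 0 then 1 / sqrt 2 else cis \<alpha> / sqrt 2)"

definition plus_k :: "nat \<Rightarrow> complex mat" where
  "plus_k k = kron_list (replicate k (ketbra (plus_a 0)))"

definition plus_k_alpha :: "nat \<Rightarrow> real \<Rightarrow> complex mat" where
  "plus_k_alpha k \<alpha> = kron (kron_list (replicate (k-1) (ketbra (plus_a 0)))) (ketbra (plus_a \<alpha>))"

text \<open>States on X \<oplus> C|bot>, dim X = 2^k; |bot> is the last basis vector (index 2^k).
  ext_state k \<rho> embeds an operator on X as the upper-left block.\<close>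
definition ext_state :: "nat \<Rightarrow> complex mat \<Rightarrow> complex mat" where
  "ext_state k \<rho> = mat (2^k + 1) (2^k + 1)
     (\<lambda>(i,j). if i < 2^k \<and> j < 2^k then \<rho> $$ (i,j) else 0)"

definition bot_state :: "nat \<Rightarrow> complex mat" where
  "bot_state k = ketbra (unit_vec (2^k + 1) (2^k))"

definition mix_bot :: "nat \<Rightarrow> real \<Rightarrow> complex mat \<Rightarrow> complex mat" where
  "mix_bot k p \<rho> = complex_of_real p \<cdot>\<^sub>m ext_state k \<rho> + complex_of_real (1 - p) \<cdot>\<^sub>m bot_state k"

definition accept_prob ::
  "complex mat \<Rightarrow> (nat \<Rightarrow> complex mat) \<Rightarrow> (nat \<Rightarrow> complex vec) \<Rightarrow> nat \<Rightarrow> nat \<Rightarrow> real" where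
  "accept_prob \<mu> T \<chi> n l = Re (mtrace (\<mu> * kron_list
      (map (\<lambda>i. T i * ketbra (\<chi> i) * dag (T i)) (filter (\<lambda>i. i \<noteq> l) [1..<n+2]))))"

definition avg_accept ::
  "(nat \<Rightarrow> real) \<Rightarrow> (nat \<Rightarrow> complex mat) \<Rightarrow> (nat \<Rightarrow> nat \<Rightarrow> complex mat) \<Rightarrow> (nat \<Rightarrow> nat \<Rightarrow> complex vec) \<Rightarrow> real" where
  "avg_accept \<Omega> \<mu> T \<chi> = (\<Sum>n. \<Omega> n / real (n+1) * (\<Sum>l\<in>{1..n+1}. accept_prob (\<mu> n) (T n) (\<chi> n) n l))"

definition attacked :: "nat \<Rightarrow> bool \<Rightarrow> real \<Rightarrow> complex mat \<Rightarrow> complex mat" where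
  "attacked k before \<alpha> T = (if before then T * Aphase k \<alpha> else Aphase k \<alpha> * T)"

end

theory Submission
  imports Defs
begin


lemma mv_index: "A \<in> carrier_mat m n \<Longrightarrow> v \<in> carrier_vec n \<Longrightarrow> i < m \<Longrightarrow>
  (A *\<^sub>v v) $ i = (\<Sum>j<n. A $$ (i,j) * v $ j)"
  by (auto simp: scalar_prod_def atLeast0LessThan intro!: sum.cong)

lemma cinner_add_right: "a \<in> carrier_vec n \<Longrightarrow> b \<in> carrier_vec n \<Longrightarrow> c \<in> carrier_vec n \<Longrightarrow>
   cinner a (b + c) = cinner a b + cinner a c"
  unfolding cinner_def by (auto simp: sum.distrib ring_distribs)

lemma cinner_add_left: "a \<in> carrier_vec n \<Longrightarrow> b \<in> carrier_vec n \<Longrightarrow> c \<in> carrier_vec n \<Longrightarrow>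
   cinner (a + b) c = cinner a c + cinner b c"
  unfolding cinner_def by (auto simp: sum.distrib ring_distribs)

lemma cinner_minus_right: "a \<in> carrier_vec n \<Longrightarrow> b \<in> carrier_vec n \<Longrightarrow> c \<in> carrier_vec n \<Longrightarrow>
   cinner a (b - c) = cinner a b - cinner a c"
  unfolding cinner_def by (auto simp: sum_subtractf ring_distribs)

lemma cinner_minus_left: "a \<in> carrier_vec n \<Longrightarrow> b \<in> carrier_vec n \<Longrightarrow> c \<in> carrier_vec n \<Longrightarrow>
   cinner (a - b) c = cinner a c - cinner b c"
  unfolding cinner_def by (auto simp: sum_subtractf ring_distribs)

lemma cinner_smult_right: "a \<in> carrier_vec n \<Longrightarrow> b \<in> carrier_vec n \<Longrightarrow>
   cinner a (s \<cdot>\<^sub>v b) = s * cinner a b"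
  unfolding cinner_def by (auto simp: sum_distrib_left algebra_simps)

lemma cinner_smult_left: "a \<in> carrier_vec n \<Longrightarrow> b \<in> carrier_vec n \<Longrightarrow>
   cinner (s \<cdot>\<^sub>v a) b = cnj s * cinner a b"
  unfolding cinner_def by (auto simp: sum_distrib_left algebra_simps)

lemma cinner_swap: "a \<in> carrier_vec n \<Longrightarrow> b \<in> carrier_vec n \<Longrightarrow> cinner b a = cnj (cinner a b)"
  unfolding cinner_def by (auto simp: mult.commute)

lemma cinner_self: "cinner a a = complex_of_real (\<Sum>i<dim_vec a. (cmod (a $ i))\<^sup>2)"
  unfolding cinner_def of_real_sum
proof (intro sum.cong refl)
  fix i show "cnj (a $ i) * a $ i = complex_of_real ((cmod (a $ i))\<^sup>2)"
    using complex_norm_square[of "a$i"] by (simp add: mult.commute)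
qed

lemma cinner_self_ge0: "Re (cinner a a) \<ge> 0" "Im (cinner a a) = 0"
  by (auto simp: cinner_self intro: sum_nonneg)

lemma cinner_self_zero: assumes "cinner a a = 0" shows "a = 0\<^sub>v (dim_vec a)"
proof -
  have "complex_of_real (\<Sum>i<dim_vec a. (cmod (a $ i))\<^sup>2) = 0" using assms by (simp only: cinner_self)
  then have "(\<Sum>i<dim_vec a. (cmod (a $ i))\<^sup>2) = 0" by (simp only: of_real_eq_0_iff)
  then have "\<forall>i\<in>{..<dim_vec a}. (cmod (a $ i))\<^sup>2 = 0"
    by (subst sum_nonneg_eq_0_iff[symmetric]) auto
  then show ?thesis by (auto intro!: eq_vecI)
qed

lemma adjoint: assumes "M \<in> carrier_mat m m" "v \<in> carrier_vec m" "w \<in> carrier_vec m"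
  shows "cinner v (M *\<^sub>v w) = cinner (dag M *\<^sub>v v) w"
proof -
  have dM: "dag M \<in> carrier_mat m m" using assms by (auto simp: dag_def)
  have "cinner v (M *\<^sub>v w) = (\<Sum>i<m. \<Sum>j<m. cnj (v$i) * M $$ (i,j) * w $ j)"
    unfolding cinner_def using assms by (auto simp: mv_index sum_distrib_left mult.assoc simp del: index_mult_mat_vec intro!: sum.cong)
  also have "\<dots> = (\<Sum>j<m. \<Sum>i<m. cnj (v$i) * M $$ (i,j) * w $ j)" by (rule sum.swap)
  also have "\<dots> = cinner (dag M *\<^sub>v v) w"
  proof -
    have "\<And>j. j < m \<Longrightarrow> (dag M *\<^sub>v v) $ j = (\<Sum>i<m. cnj (M $$ (i,j)) * v $ i)"
      using mv_index[OF dM assms(2)] assms by (simp add: dag_def)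
    then show ?thesis unfolding cinner_def using assms dM
      by (auto simp: sum_distrib_right sum_distrib_left mult.commute mult.left_commute simp del: index_mult_mat_vec intro!: sum.cong)
  qed
  finally show ?thesis .
qed


lemma smult_mat_mv: "A \<in> carrier_mat m n \<Longrightarrow> v \<in> carrier_vec n \<Longrightarrow> (c \<cdot>\<^sub>m A) *\<^sub>v v = c \<cdot>\<^sub>v (A *\<^sub>v v)"
  by (rule eq_vecI) (auto simp: scalar_prod_def sum_distrib_left mult.assoc)

lemma ketbra_carrier: "x \<in> carrier_vec n \<Longrightarrow> ketbra x \<in> carrier_mat n n"
  by (auto simp: ketbra_def)

lemma ketbra_mv: assumes "x \<in> carrier_vec n" "u \<in> carrier_vec n"
  shows "ketbra x *\<^sub>v u = cinner x u \<cdot>\<^sub>v x"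
  using assms
  by (intro eq_vecI) (auto simp: ketbra_def scalar_prod_def cinner_def sum_distrib_left mult.assoc mult.commute mult.left_commute atLeast0LessThan)

lemma mat_eq_action: fixes A B :: "complex mat" assumes "A \<in> carrier_mat m m" "B \<in> carrier_mat m m"
  "\<And>v. v \<in> carrier_vec m \<Longrightarrow> A *\<^sub>v v = B *\<^sub>v v" shows "A = B"
proof (rule eq_matI)
  fix i j assume ij: "i < dim_row B" "j < dim_col B"
  have "A *\<^sub>v unit_vec m j = B *\<^sub>v unit_vec m j" using assms(3) by simp
  then have "(A *\<^sub>v unit_vec m j) $ i = (B *\<^sub>v unit_vec m j) $ i" by simp
  then show "A $$ (i, j) = B $$ (i, j)" using ij assms(1,2) by (simp add: scalar_prod_right_unit)
qed (use assms in auto)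

definition qf :: "complex mat \<Rightarrow> complex vec \<Rightarrow> complex" where
  "qf M v = cinner v (M *\<^sub>v v)"

lemma psd_sq_eig:
  assumes B: "psd m B" and BB: "B * B = A" and x: "x \<in> carrier_vec m"
    and Ax: "A *\<^sub>v x = complex_of_real a \<cdot>\<^sub>v x" and a: "a \<ge> 0"
  shows "B *\<^sub>v x = complex_of_real (sqrt a) \<cdot>\<^sub>v x"
proof -
  have Bc: "B \<in> carrier_mat m m" and dB: "dag B = B" using B by (auto simp: psd_def)
  have BBx: "B *\<^sub>v (B *\<^sub>v x) = complex_of_real a \<cdot>\<^sub>v x"
    using Ax BB Bc x by (simp add: assoc_mult_mat_vec[symmetric])
  have Bxc: "B *\<^sub>v x \<in> carrier_vec m" using Bc x by simp
  show ?thesis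
  proof (cases "a = 0")
    case True
    have "cinner (B *\<^sub>v x) (B *\<^sub>v x) = cinner x (B *\<^sub>v (B *\<^sub>v x))"
      using adjoint[OF Bc x Bxc] dB by simp
    also have "\<dots> = 0" using BBx True x by (simp add: cinner_def)
    finally have "B *\<^sub>v x = 0\<^sub>v m" using cinner_self_zero Bc by fastforce
    then show ?thesis using True x by (auto intro!: eq_vecI)
  next
    case False
    define s where "s = sqrt a"
    have s: "s > 0" "s * s = a" using a False by (auto simp: s_def)
    define r where "r = B *\<^sub>v x - complex_of_real s \<cdot>\<^sub>v x"
    have rc: "r \<in> carrier_vec m" using Bc x by (simp add: r_def)
    have Br: "B *\<^sub>v r = - (complex_of_real s \<cdot>\<^sub>v r)"
    proof -
      have "B *\<^sub>v r = B *\<^sub>v (B *\<^sub>v x) - complex_of_real s \<cdot>\<^sub>v (B *\<^sub>v x)"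
        unfolding r_def using Bc x by (simp add: mult_minus_distrib_mat_vec mult_mat_vec)
      also have "\<dots> = - (complex_of_real s \<cdot>\<^sub>v r)"
        unfolding BBx r_def using Bc x s
        by (intro eq_vecI) (auto simp: algebra_simps simp flip: of_real_mult)
      finally show ?thesis .
    qed
    have "cinner r (B *\<^sub>v r) = - (complex_of_real s * cinner r r)"
      using rc Br by (simp add: cinner_def sum_negf sum_distrib_left algebra_simps)
    moreover have "Re (cinner r (B *\<^sub>v r)) \<ge> 0" using B rc by (auto simp: psd_def)
    ultimately have "s * Re (cinner r r) \<le> 0" by simp
    then have "Re (cinner r r) \<le> 0" using s by (simp add: mult_le_0_iff)
    then have "cinner r r = 0" using cinner_self_ge0[of r] by (simp add: complex_eq_iff)
    then have "r = 0\<^sub>v m" using cinner_self_zero rc by fastforce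
    then have "\<And>i. i < m \<Longrightarrow> r $ i = 0" by simp
    then show ?thesis unfolding s_def[symmetric] using Bc x
      by (intro eq_vecI) (auto simp: r_def)
  qed
qed


definition K2 :: "real \<Rightarrow> real \<Rightarrow> complex vec \<Rightarrow> complex vec \<Rightarrow> complex mat" where
  "K2 a b x y = complex_of_real a \<cdot>\<^sub>m ketbra x + complex_of_real b \<cdot>\<^sub>m ketbra y"

lemma K2_carrier: "x \<in> carrier_vec m \<Longrightarrow> y \<in> carrier_vec m \<Longrightarrow> K2 a b x y \<in> carrier_mat m m"
  by (auto simp: K2_def ketbra_def)

lemma K2_mv: assumes "x \<in> carrier_vec m" "y \<in> carrier_vec m" "u \<in> carrier_vec m"
  shows "K2 a b x y *\<^sub>v u = (complex_of_real a * cinner x u) \<cdot>\<^sub>v x + (complex_of_real b * cinner y u) \<cdot>\<^sub>v y"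
  using assms unfolding K2_def
  by (subst add_mult_distrib_mat_vec[of _ m m]) (auto simp: ketbra_carrier smult_mat_mv[of _ m m] ketbra_mv[of _ m] smult_smult_assoc)

lemma K2_dag: "x \<in> carrier_vec m \<Longrightarrow> y \<in> carrier_vec m \<Longrightarrow> dag (K2 a b x y) = K2 a b x y"
  by (rule eq_matI) (auto simp: K2_def dag_def ketbra_def)

lemma cinner_mult_cnj: "z * cnj z = complex_of_real ((cmod z)\<^sup>2)"
  using complex_norm_square[of z] by simp

lemma K2_qf: assumes "x \<in> carrier_vec m" "y \<in> carrier_vec m" "u \<in> carrier_vec m"
  shows "cinner u (K2 a b x y *\<^sub>v u) = complex_of_real (a * (cmod (cinner x u))\<^sup>2 + b * (cmod (cinner y u))\<^sup>2)"
proof -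
  have "cinner u (K2 a b x y *\<^sub>v u) = complex_of_real a * (cinner x u * cinner u x) + complex_of_real b * (cinner y u * cinner u y)"
    using assms by (simp add: K2_mv cinner_add_right[of _ m] cinner_smult_right[of _ m] algebra_simps)
  also have "\<dots> = complex_of_real (a * (cmod (cinner x u))\<^sup>2 + b * (cmod (cinner y u))\<^sup>2)"
    using assms by (simp add: cinner_swap[of x m u] cinner_swap[of y m u] cinner_mult_cnj)
  finally show ?thesis .
qed

lemma K2_psd: assumes "x \<in> carrier_vec m" "y \<in> carrier_vec m" "a \<ge> 0" "b \<ge> 0"
  shows "psd m (K2 a b x y)"
  unfolding psd_def using assms by (auto simp: K2_carrier K2_dag K2_qf)

lemma sqrt_sqrt_c: "a \<ge> 0 \<Longrightarrow> complex_of_real (sqrt a) * (complex_of_real (sqrt a) * z) = complex_of_real a * z"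
  by (simp add: mult.assoc[symmetric] flip: of_real_mult)

lemma sqrtm_K2:
  assumes x: "x \<in> carrier_vec m" and y: "y \<in> carrier_vec m"
    and xx: "cinner x x = 1" and yy: "cinner y y = 1" and xy: "cinner x y = 0"
    and a: "a \<ge> 0" and b: "b \<ge> 0"
  shows "sqrtm (K2 a b x y) = K2 (sqrt a) (sqrt b) x y"
proof -
  have yx: "cinner y x = 0" using cinner_swap[OF x y] xy by simp
  have dr: "dim_row (K2 a b x y) = m" using K2_carrier[OF x y] by auto
  let ?C = "K2 (sqrt a) (sqrt b) x y"
  let ?A = "K2 a b x y"
  have Cc: "?C \<in> carrier_mat m m" and Ac: "?A \<in> carrier_mat m m" using K2_carrier[OF x y] by auto
  have CC: "?C * ?C = ?A"
  proof (rule mat_eq_action[of _ m])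
    fix u :: "complex vec" assume u: "u \<in> carrier_vec m"
    have "?C * ?C *\<^sub>v u = ?C *\<^sub>v (?C *\<^sub>v u)" using Cc u by (simp add: assoc_mult_mat_vec)
    also have "\<dots> = ?A *\<^sub>v u"
      using x y u xx yy xy yx a b
      by (simp add: K2_mv cinner_add_right[of _ m] cinner_smult_right[of _ m] sqrt_sqrt_c)
    finally show "?C * ?C *\<^sub>v u = ?A *\<^sub>v u" .
  qed (use Cc Ac in auto)
  have Ax: "?A *\<^sub>v x = complex_of_real a \<cdot>\<^sub>v x" using x y xx yx by (simp add: K2_mv) (intro eq_vecI; simp)
  have Ay: "?A *\<^sub>v y = complex_of_real b \<cdot>\<^sub>v y" using x y yy xy by (simp add: K2_mv) (intro eq_vecI; simp)
  have uniq: "B = ?C" if B: "psd m B" and BB: "B * B = ?A" for B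
  proof -
    have Bc: "B \<in> carrier_mat m m" using B by (auto simp: psd_def)
    show ?thesis
    proof (rule mat_eq_action[OF Bc Cc])
      fix u :: "complex vec" assume u: "u \<in> carrier_vec m"
      define z where "z = u - (cinner x u \<cdot>\<^sub>v x + cinner y u \<cdot>\<^sub>v y)"
      have zc: "z \<in> carrier_vec m" using x y u by (simp add: z_def)
      have ud: "u = cinner x u \<cdot>\<^sub>v x + cinner y u \<cdot>\<^sub>v y + z"
        unfolding z_def using x y u by (intro eq_vecI) auto
      have "?A *\<^sub>v z = ?A *\<^sub>v u - ?A *\<^sub>v (cinner x u \<cdot>\<^sub>v x + cinner y u \<cdot>\<^sub>v y)"
        unfolding z_def using Ac x y u by (simp add: mult_minus_distrib_mat_vec)
      also have "\<dots> = complex_of_real 0 \<cdot>\<^sub>v z"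
        using Ac x y u unfolding z_def
        by (simp add: mult_add_distrib_mat_vec mult_mat_vec Ax Ay K2_mv) (intro eq_vecI; simp)
      finally have Az: "?A *\<^sub>v z = complex_of_real 0 \<cdot>\<^sub>v z" .
      have Bx: "B *\<^sub>v x = complex_of_real (sqrt a) \<cdot>\<^sub>v x" by (rule psd_sq_eig[OF B BB x Ax a])
      have By: "B *\<^sub>v y = complex_of_real (sqrt b) \<cdot>\<^sub>v y" by (rule psd_sq_eig[OF B BB y Ay b])
      have Bz: "B *\<^sub>v z = complex_of_real (sqrt 0) \<cdot>\<^sub>v z" by (rule psd_sq_eig[OF B BB zc Az]) simp
      have "B *\<^sub>v u = cinner x u \<cdot>\<^sub>v (B *\<^sub>v x) + cinner y u \<cdot>\<^sub>v (B *\<^sub>v y) + B *\<^sub>v z"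
        using Bc x y zc by (subst ud) (simp add: mult_add_distrib_mat_vec mult_mat_vec; intro eq_vecI; simp)
      also have "\<dots> = ?C *\<^sub>v u"
        unfolding Bx By Bz using x y u zc by (simp add: K2_mv) (intro eq_vecI; simp)
      finally show "B *\<^sub>v u = ?C *\<^sub>v u" .
    qed
  qed
  show ?thesis unfolding sqrtm_def dr
    by (rule the_equality) (use K2_psd[OF x y] CC uniq a b in auto)
qed


lemma mtrace_K2: assumes "x \<in> carrier_vec m" "y \<in> carrier_vec m"
  shows "mtrace (K2 a b x y) = complex_of_real a * cinner x x + complex_of_real b * cinner y y"
  using assms unfolding mtrace_def K2_def cinner_def
  by (auto simp: ketbra_def sum.distrib sum_distrib_left mult.commute mult.left_commute)

lemma fid_K2:
  assumes X: "X \<in> carrier_vec m" and V: "V \<in> carrier_vec m" and E: "E \<in> carrier_vec m"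
    and XX: "cinner X X = 1" and VV: "cinner V V = 1" and EE: "cinner E E = 1"
    and XE: "cinner X E = 0" and VE: "cinner V E = 0"
    and q: "0 \<le> q" "q \<le> 1" and p: "0 \<le> p" "p \<le> 1"
  shows "fidelity (K2 q (1-q) X E) (K2 p (1-p) V E) =
     (sqrt (q*p) * cmod (cinner X V) + sqrt ((1-q)*(1-p)))\<^sup>2"
proof -
  have EX: "cinner E X = 0" using cinner_swap[OF X E] XE by simp
  have EV: "cinner E V = 0" using cinner_swap[OF V E] VE by simp
  have VX: "cinner V X = cnj (cinner X V)" using cinner_swap[OF X V] by simp
  have R: "sqrtm (K2 q (1-q) X E) = K2 (sqrt q) (sqrt (1-q)) X E"
    by (rule sqrtm_K2[OF X E XX EE XE]) (use q in auto)
  let ?R = "K2 (sqrt q) (sqrt (1-q)) X E"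
  let ?S = "K2 p (1-p) V E"
  let ?c = "(cmod (cinner X V))\<^sup>2"
  have Rc: "?R \<in> carrier_mat m m" and Sc: "?S \<in> carrier_mat m m" using K2_carrier X E V by auto
  have prod: "?R * ?S * ?R = K2 (q*p*?c) ((1-q)*(1-p)) X E"
  proof (rule mat_eq_action[of _ m])
    fix u :: "complex vec" assume u: "u \<in> carrier_vec m"
    have "?R * ?S * ?R *\<^sub>v u = ?R *\<^sub>v (?S *\<^sub>v (?R *\<^sub>v u))"
      using Rc Sc u by (simp add: assoc_mult_mat_vec[of _ m m _ m])
    also have "\<dots> = (complex_of_real (sqrt q) * (complex_of_real p * (complex_of_real (sqrt q) * cinner X u * cinner V X)) * cinner X V) \<cdot>\<^sub>v X
       + (complex_of_real (sqrt (1-q)) * (complex_of_real (1-p) * (complex_of_real (sqrt (1-q)) * cinner E u))) \<cdot>\<^sub>v E"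
      using X V E u XX VV EE XE VE EX EV
      by (simp add: K2_mv cinner_add_right[of _ m] cinner_smult_right[of _ m] algebra_simps)
    also have "\<dots> = K2 (q*p*?c) ((1-q)*(1-p)) X E *\<^sub>v u"
    proof -
      have c1: "complex_of_real (sqrt q) * (complex_of_real p * (complex_of_real (sqrt q) * cinner X u * cinner V X)) * cinner X V
          = complex_of_real (q*p*?c) * cinner X u"
      proof -
        have cc: "cinner X V * cnj (cinner X V) = complex_of_real ?c" by (rule cinner_mult_cnj)
        show ?thesis using q unfolding VX
          by (simp add: algebra_simps sqrt_sqrt_c cc flip: of_real_mult of_real_power)
      qed
      have c2: "complex_of_real (sqrt (1-q)) * (complex_of_real (1-p) * (complex_of_real (sqrt (1-q)) * cinner E u))
          = complex_of_real ((1-q)*(1-p)) * cinner E u"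
        using q by (simp add: algebra_simps sqrt_sqrt_c flip: of_real_mult)
      show ?thesis unfolding c1 c2 using X E u by (simp add: K2_mv)
    qed
    finally show "?R * ?S * ?R *\<^sub>v u = K2 (q*p*?c) ((1-q)*(1-p)) X E *\<^sub>v u" .
  qed (use mult_carrier_mat[OF mult_carrier_mat[OF Rc Sc] Rc] X E K2_carrier[OF X E] in auto)
  have sq: "sqrtm (K2 (q*p*?c) ((1-q)*(1-p)) X E) = K2 (sqrt (q*p*?c)) (sqrt ((1-q)*(1-p))) X E"
    by (rule sqrtm_K2[OF X E XX EE XE]) (use q p in auto)
  show ?thesis
    unfolding fidelity_def R prod sq using X E XX EE
    by (simp add: mtrace_K2 real_sqrt_mult)
qed


lemma sum_div_mod: fixes m n :: nat shows "(\<Sum>i<m*n. f (i div n) (i mod n)) = (\<Sum>a<m. \<Sum>b<n. f a b)"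
proof -
  have "(\<Sum>i<m*n. f (i div n) (i mod n)) = (\<Sum>a<m. \<Sum>i\<in>{a*n..<a*n+n}. f (i div n) (i mod n))"
    by (simp add: sum.nat_group)
  also have "\<dots> = (\<Sum>a<m. \<Sum>b<n. f a b)"
  proof (rule sum.cong[OF refl])
    fix a
    have dm: "i div n = a \<and> i mod n = i - a*n" if "a*n \<le> i" "i < a*n+n" for i
    proof -
      have g: "(a*n + b) div n = a \<and> (a*n + b) mod n = b" if "b < n" for b
        using that by simp
      have *: "a*n + (i - a*n) = i" "i - a*n < n" using that by auto
      show ?thesis using g[OF *(2)] unfolding *(1) by simp
    qed
    show "(\<Sum>i\<in>{a*n..<a*n+n}. f (i div n) (i mod n)) = (\<Sum>b<n. f a b)"
      by (rule sum.reindex_bij_witness[of _ "\<lambda>b. a*n+b" "\<lambda>i. i - a*n"]) (auto simp: dm)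
  qed
  finally show ?thesis .
qed

definition vkron :: "complex vec \<Rightarrow> complex vec \<Rightarrow> complex vec" where
  "vkron a b = vec (dim_vec a * dim_vec b) (\<lambda>i. a $ (i div dim_vec b) * b $ (i mod dim_vec b))"

definition vkl :: "complex vec list \<Rightarrow> complex vec" where
  "vkl vs = foldr vkron vs (vec 1 (\<lambda>_. 1))"

lemma dim_vkron[simp]: "dim_vec (vkron a b) = dim_vec a * dim_vec b"
  by (simp add: vkron_def)

lemma cinner_vkron: assumes "dim_vec c = dim_vec a" "dim_vec d = dim_vec b"
  shows "cinner (vkron a b) (vkron c d) = cinner a c * cinner b d"
proof -
  let ?f = "\<lambda>x y. cnj (a $ x * b $ y) * (c $ x * d $ y)"
  have "cinner (vkron a b) (vkron c d) = (\<Sum>i<dim_vec a * dim_vec b. ?f (i div dim_vec b) (i mod dim_vec b))"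
    using assms unfolding cinner_def vkron_def by (intro sum.cong) auto
  also have "\<dots> = (\<Sum>x<dim_vec a. \<Sum>y<dim_vec b. ?f x y)" by (rule sum_div_mod)
  also have "\<dots> = cinner a c * cinner b d"
    unfolding cinner_def sum_product by (intro sum.cong refl) (simp add: algebra_simps)
  finally show ?thesis .
qed

lemma kron_ketbra: "kron (ketbra a) (ketbra b) = ketbra (vkron a b)"
proof (rule eq_matI)
  fix i j assume "i < dim_row (ketbra (vkron a b))" "j < dim_col (ketbra (vkron a b))"
  then have ij: "i < dim_vec a * dim_vec b" "j < dim_vec a * dim_vec b" by (auto simp: ketbra_def)
  then have "dim_vec b > 0" by (cases "dim_vec b") auto
  moreover have "i div dim_vec b < dim_vec a" "j div dim_vec b < dim_vec a"
    using ij by (auto simp: less_mult_imp_div_less)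
  ultimately show "kron (ketbra a) (ketbra b) $$ (i, j) = ketbra (vkron a b) $$ (i, j)"
    using ij by (simp add: kron_def ketbra_def vkron_def)
qed (auto simp: kron_def ketbra_def)

lemma kron_list_ketbra: "kron_list (map ketbra vs) = ketbra (vkl vs)"
proof (induction vs)
  case Nil
  show ?case unfolding kron_list_def vkl_def
    by (rule eq_matI) (auto simp: ketbra_def)
next
  case (Cons v vs)
  then show ?case by (simp add: kron_list_def vkl_def kron_ketbra)
qed

lemma dim_vkl: "dim_vec (vkl vs) = prod_list (map dim_vec vs)"
  by (induction vs) (auto simp: vkl_def)

lemma cinner_vkl: "list_all2 (\<lambda>a b. dim_vec a = dim_vec b) vs ws \<Longrightarrow>
   cinner (vkl vs) (vkl ws) = prod_list (map2 cinner vs ws)"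
proof (induction vs ws rule: list_all2_induct)
  case Nil
  then show ?case by (simp add: vkl_def cinner_def)
next
  case (Cons x xs y ys)
  have "list_all2 (=) (map dim_vec xs) (map dim_vec ys)" using Cons(2) by (simp add: list.rel_map)
  then have "map dim_vec xs = map dim_vec ys" by (simp add: list.rel_eq)
  then have "dim_vec (vkl ys) = dim_vec (vkl xs)" by (simp add: dim_vkl)
  then show ?case using Cons by (simp add: vkl_def cinner_vkron)
qed


definition extv :: "nat \<Rightarrow> complex vec \<Rightarrow> complex vec" where
  "extv k v = vec (2^k+1) (\<lambda>i. if i < 2^k then v $ i else 0)"

definition ebot :: "nat \<Rightarrow> complex vec" where
  "ebot k = unit_vec (2^k+1) (2^k)"

lemma extv_carrier: "extv k v \<in> carrier_vec (2^k+1)" by (simp add: extv_def)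
lemma ebot_carrier: "ebot k \<in> carrier_vec (2^k+1)" by (simp add: ebot_def)

lemma cinner_extv: assumes "v \<in> carrier_vec (2^k)" "w \<in> carrier_vec (2^k)"
  shows "cinner (extv k v) (extv k w) = cinner v w"
  using assms unfolding cinner_def extv_def by simp

lemma cinner_extv_ebot: "cinner (extv k v) (ebot k) = 0"
  unfolding cinner_def extv_def ebot_def by (simp add: unit_vec_def)

lemma cinner_ebot: "cinner (ebot k) (ebot k) = 1"
  unfolding cinner_def ebot_def by (simp add: unit_vec_def)

lemma ext_state_ketbra: assumes "v \<in> carrier_vec (2^k)"
  shows "ext_state k (ketbra v) = ketbra (extv k v)"
  using assms by (intro eq_matI) (auto simp: ext_state_def ketbra_def extv_def)

lemma mix_bot_K2: assumes "v \<in> carrier_vec (2^k)"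
  shows "mix_bot k p (ketbra v) = K2 p (1-p) (extv k v) (ebot k)"
  unfolding mix_bot_def K2_def ext_state_ketbra[OF assms] bot_state_def ebot_def ..

lemma ext_state_K2: assumes "v \<in> carrier_vec (2^k)"
  shows "ext_state k (ketbra v) = K2 1 0 (extv k v) (ebot k)"
  unfolding ext_state_ketbra[OF assms] K2_def
  by (rule eq_matI) (auto simp: ketbra_def extv_def ebot_def)

lemma fid_mix:
  assumes v: "v \<in> carrier_vec (2^k)" and w: "w \<in> carrier_vec (2^k)"
    and vv: "cinner v v = 1" and ww: "cinner w w = 1"
    and q: "0 \<le> q" "q \<le> 1" and p: "0 \<le> p" "p \<le> 1"
  shows "fidelity (mix_bot k q (ketbra w)) (mix_bot k p (ketbra v)) =
     (sqrt (q*p) * cmod (cinner w v) + sqrt ((1-q)*(1-p)))\<^sup>2"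
  unfolding mix_bot_K2[OF v] mix_bot_K2[OF w]
  using fid_K2[OF extv_carrier[of k w] extv_carrier[of k v] ebot_carrier[of k]] q p
  by (simp add: cinner_extv[OF w v] cinner_extv[OF w w] cinner_extv[OF v v] vv ww
      cinner_ebot cinner_extv_ebot)

lemma fid_correct:
  assumes v: "v \<in> carrier_vec (2^k)" and vv: "cinner v v = 1"
    and q: "0 \<le> q" "q \<le> 1"
  shows "fidelity (mix_bot k q (ketbra v)) (ext_state k (ketbra v)) = q"
proof -
  have "fidelity (mix_bot k q (ketbra v)) (ext_state k (ketbra v)) =
     (sqrt (q*1) * cmod (cinner v v) + sqrt ((1-q)*(1-1)))\<^sup>2"
    unfolding mix_bot_K2[OF v] ext_state_K2[OF v]
    using fid_K2[OF extv_carrier[of k v] extv_carrier[of k v] ebot_carrier[of k], of q 1] q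
    by (simp add: cinner_extv[OF v v] vv cinner_ebot cinner_extv_ebot)
  then show ?thesis using q vv by simp
qed



lemma vkron_one_right: "vkron v (vec (Suc 0) (\<lambda>_. 1)) = v"
  by (rule eq_vecI) (auto simp: vkron_def)

lemma vkron_one_left: "vkron (vec (Suc 0) (\<lambda>_. 1)) v = v"
  by (rule eq_vecI) (auto simp: vkron_def)

lemma vkron_assoc: "vkron (vkron a b) c = vkron a (vkron b c)"
proof (rule eq_vecI)
  fix i assume "i < dim_vec (vkron a (vkron b c))"
  then have i: "i < dim_vec a * dim_vec b * dim_vec c" by simp
  then have nc: "dim_vec c > 0" by (cases "dim_vec c") auto
  from i have nb: "dim_vec b > 0" by (cases "dim_vec b") auto
  have i4: "i mod (dim_vec b * dim_vec c) < dim_vec b * dim_vec c" using nb nc by simp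
  have i1: "i div (dim_vec b * dim_vec c) = i div dim_vec c div dim_vec b"
    by (metis div_mult2_eq mult.commute)
  have i2: "i mod (dim_vec b * dim_vec c) div dim_vec c = i div dim_vec c mod dim_vec b"
  proof -
    have "i mod (dim_vec b * dim_vec c) = dim_vec c * (i div dim_vec c mod dim_vec b) + i mod dim_vec c"
      by (metis mod_mult2_eq mult.commute)
    moreover have "\<And>X r. (r::nat) < dim_vec c \<Longrightarrow> (dim_vec c * X + r) div dim_vec c = X"
      by (metis add.commute div_less div_mult_self2 gr_implies_not0 add_0 mult.commute)
    ultimately show ?thesis using nc by simp
  qed
  have i3: "i mod (dim_vec b * dim_vec c) mod dim_vec c = i mod dim_vec c"
    by (simp add: mod_mod_cancel)
  have "i div dim_vec c < dim_vec a * dim_vec b" using i nc by (simp add: less_mult_imp_div_less)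
  then show "vkron (vkron a b) c $ i = vkron a (vkron b c) $ i"
    using i i1 i2 i3 i4 nc by (simp add: vkron_def)
qed simp

lemma vkl_snoc: "vkl (xs @ [x]) = vkron (vkl xs) x"
  by (induction xs) (auto simp: vkl_def vkron_one_right vkron_one_left vkron_assoc)



definition vplus :: "nat \<Rightarrow> complex vec" where
  "vplus k = vkl (replicate k (plus_a 0))"

definition wplus :: "nat \<Rightarrow> real \<Rightarrow> complex vec" where
  "wplus k \<alpha> = vkron (vkl (replicate (k-1) (plus_a 0))) (plus_a \<alpha>)"

lemma plus_k_ketbra: "plus_k k = ketbra (vplus k)"
  unfolding plus_k_def vplus_def kron_list_ketbra[symmetric] by simp

lemma plus_k_alpha_ketbra: "plus_k_alpha k \<alpha> = ketbra (wplus k \<alpha>)"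
  unfolding plus_k_alpha_def wplus_def kron_ketbra[symmetric] kron_list_ketbra[symmetric] by simp

lemma dim_plus_a[simp]: "dim_vec (plus_a a) = 2" by (simp add: plus_a_def)

lemma vkl_rep_dim: "dim_vec (vkl (replicate j (plus_a 0))) = 2^j"
  by (simp add: dim_vkl)

lemma cinner_plus_a: "cinner (plus_a a) (plus_a b) = (1 + cnj (cis a) * cis b) / 2"
  unfolding cinner_def plus_a_def
  by (simp add: numeral_2_eq_2 lessThan_Suc field_simps power2_eq_square flip: of_real_mult)

lemma cinner_vkl_rep: "cinner (vkl (replicate j (plus_a 0))) (vkl (replicate j (plus_a 0))) = 1"
proof -
  have "cinner (vkl (replicate j (plus_a 0))) (vkl (replicate j (plus_a 0))) =
     prod_list (map2 cinner (replicate j (plus_a 0)) (replicate j (plus_a 0)))"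
    by (rule cinner_vkl) (simp add: list_all2_iff set_zip)
  also have "\<dots> = 1" by (simp add: zip_replicate cinner_plus_a)
  finally show ?thesis .
qed

lemma vplus_carrier: "vplus k \<in> carrier_vec (2^k)"
  by (rule carrier_vecI) (simp add: vplus_def vkl_rep_dim)

lemma wplus_carrier: "k \<ge> 1 \<Longrightarrow> wplus k a \<in> carrier_vec (2^k)"
  by (rule carrier_vecI) (cases k, auto simp: wplus_def vkl_rep_dim)

lemma vplus_alt: "k \<ge> 1 \<Longrightarrow> vplus k = vkron (vkl (replicate (k-1) (plus_a 0))) (plus_a 0)"
proof -
  assume "k \<ge> 1"
  then have "replicate k (plus_a 0) = replicate (k-1) (plus_a 0) @ [plus_a 0]"
    by (cases k) (auto simp: replicate_append_same)
  then show ?thesis unfolding vplus_def by (simp add: vkl_snoc)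
qed

lemma vplus_unit: "cinner (vplus k) (vplus k) = 1"
  unfolding vplus_def by (rule cinner_vkl_rep)

lemma wplus_unit: "cinner (wplus k a) (wplus k a) = 1"
  unfolding wplus_def by (simp add: cinner_vkron cinner_vkl_rep cinner_plus_a cis_cnj cis_mult)

lemma cinner_wplus_vplus: "k \<ge> 1 \<Longrightarrow> cinner (wplus k a) (vplus k) = (1 + cnj (cis a)) / 2"
  unfolding wplus_def vplus_alt by (simp add: cinner_vkron cinner_vkl_rep cinner_plus_a)

lemma cmod_wv: "k \<ge> 1 \<Longrightarrow> (cmod (cinner (wplus k a) (vplus k)))\<^sup>2 = (1 + cos a) / 2"
proof -
  assume k: "k \<ge> 1"
  have "(cmod ((1 + cnj (cis a)) / 2))\<^sup>2 = ((1 + cos a)\<^sup>2 + (sin a)\<^sup>2) / 4"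
    by (simp add: cmod_def power_divide)
  also have "\<dots> = (1 + cos a) / 2"
  proof -
    have "(1 + cos a)\<^sup>2 = 1 + 2*cos a + (cos a)\<^sup>2" by (simp add: power2_eq_square algebra_simps)
    then have "(1 + cos a)\<^sup>2 + (sin a)\<^sup>2 = 2 + 2 * cos a" using sin_cos_squared_add[of a] by linarith
    then show ?thesis by simp
  qed
  finally show ?thesis by (simp only: cinner_wplus_vplus[OF k])
qed


lemma dag_carrier: "A \<in> carrier_mat m n \<Longrightarrow> dag A \<in> carrier_mat n m"
  by (auto simp: dag_def)

lemma dag_dag: "A \<in> carrier_mat m n \<Longrightarrow> dag (dag A) = A"
  by (rule eq_matI) (auto simp: dag_def)

lemma conj_ketbra: assumes T: "T \<in> carrier_mat d d" and x: "x \<in> carrier_vec d"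
  shows "T * ketbra x * dag T = ketbra (T *\<^sub>v x)"
proof (rule mat_eq_action[of _ d])
  fix u :: "complex vec" assume u: "u \<in> carrier_vec d"
  have dT: "dag T \<in> carrier_mat d d" using dag_carrier[OF T] .
  have K: "ketbra x \<in> carrier_mat d d" using ketbra_carrier[OF x] .
  have "T * ketbra x * dag T *\<^sub>v u = T *\<^sub>v (ketbra x *\<^sub>v (dag T *\<^sub>v u))"
    using T dT K u by (simp add: assoc_mult_mat_vec[of _ d d _ d])
  also have "\<dots> = T *\<^sub>v (cinner x (dag T *\<^sub>v u) \<cdot>\<^sub>v x)"
    using ketbra_mv[OF x, of "dag T *\<^sub>v u"] dT u by simp
  also have "\<dots> = cinner (T *\<^sub>v x) u \<cdot>\<^sub>v (T *\<^sub>v x)"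
    using adjoint[OF dT x u] dag_dag[OF T] T x by (simp add: mult_mat_vec)
  also have "\<dots> = ketbra (T *\<^sub>v x) *\<^sub>v u"
    using ketbra_mv[of "T *\<^sub>v x" d u] T x u by simp
  finally show "T * ketbra x * dag T *\<^sub>v u = ketbra (T *\<^sub>v x) *\<^sub>v u" .
qed (use T x in \<open>auto simp: ketbra_def dag_def\<close>)

lemma mtrace_ketbra: assumes M: "M \<in> carrier_mat m m" and v: "v \<in> carrier_vec m"
  shows "mtrace (M * ketbra v) = cinner v (M *\<^sub>v v)"
proof -
  have "mtrace (M * ketbra v) = (\<Sum>i<m. \<Sum>j<m. M $$ (i,j) * (v $ j * cnj (v $ i)))"
    unfolding mtrace_def using M v
    by (auto simp: scalar_prod_def ketbra_def atLeast0LessThan intro!: sum.cong)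
  also have "\<dots> = cinner v (M *\<^sub>v v)"
    unfolding cinner_def using M v
    by (auto simp: mv_index[OF M v] sum_distrib_left mult.commute mult.left_commute
        simp del: index_mult_mat_vec intro!: sum.cong)
  finally show ?thesis .
qed

lemma length_filter_ne: "l \<in> {1..n+1} \<Longrightarrow> length (filter (\<lambda>i. i \<noteq> l) [1..<n+2]) = n"
proof -
  assume l: "l \<in> {1..n+1}"
  have "length (filter (\<lambda>i. i \<noteq> l) [1..<n+2]) = card ({i. i \<noteq> l} \<inter> set [1..<n+2])"
    by (rule distinct_length_filter) simp
  also have "{i. i \<noteq> l} \<inter> set [1..<n+2] = {1..<n+2} - {l}" by auto
  also have "card \<dots> = n" using l by simp
  finally show ?thesis .
qed

lemma prod_dims: "\<forall>x\<in>set L. dim_vec (f x) = d \<Longrightarrow> prod_list (map dim_vec (map f L)) = d ^ length L"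
  by (induction L) auto

lemma accept_prob_eq:
  assumes l: "l \<in> {1..n+1}"
    and T: "\<forall>i\<in>{1..n+1}. T i \<in> carrier_mat d d" and x: "\<forall>i\<in>{1..n+1}. x i \<in> carrier_vec d"
    and M: "M \<in> carrier_mat (d^n) (d^n)"
  shows "accept_prob M T x n l = Re (qf M (vkl (map (\<lambda>i. T i *\<^sub>v x i) (filter (\<lambda>i. i \<noteq> l) [1..<n+2]))))"
proof -
  define L where "L = filter (\<lambda>i. i \<noteq> l) [1..<n+2]"
  have sL: "set L \<subseteq> {1..n+1}" by (auto simp: L_def)
  have lenL: "length L = n" unfolding L_def by (rule length_filter_ne[OF l])
  have meq: "map (\<lambda>i. T i * ketbra (x i) * dag (T i)) L = map ketbra (map (\<lambda>i. T i *\<^sub>v x i) L)"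
    using T x sL by (auto intro!: conj_ketbra)
  have kl: "kron_list (map (\<lambda>i. T i * ketbra (x i) * dag (T i)) L) = ketbra (vkl (map (\<lambda>i. T i *\<^sub>v x i) L))"
    unfolding meq by (rule kron_list_ketbra)
  have "\<forall>i\<in>set L. dim_vec (T i *\<^sub>v x i) = d" using T sL by auto
  then have "dim_vec (vkl (map (\<lambda>i. T i *\<^sub>v x i) L)) = d ^ n"
    by (simp only: dim_vkl prod_dims lenL)
  then have vc: "vkl (map (\<lambda>i. T i *\<^sub>v x i) L) \<in> carrier_vec (d^n)" by (rule carrier_vecI)
  show ?thesis unfolding accept_prob_def qf_def L_def[symmetric] kl mtrace_ketbra[OF M vc] ..
qed

lemma unitary_cinner: assumes U: "is_unitary d U" and a: "a \<in> carrier_vec d" and b: "b \<in> carrier_vec d"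
  shows "cinner (U *\<^sub>v a) (U *\<^sub>v b) = cinner a b"
proof -
  have Uc: "U \<in> carrier_mat d d" and UU: "dag U * U = 1\<^sub>m d" using U by (auto simp: is_unitary_def)
  have "cinner (U *\<^sub>v a) (U *\<^sub>v b) = cinner a (dag U *\<^sub>v (U *\<^sub>v b))"
    using adjoint[OF dag_carrier[OF Uc] a, of "U *\<^sub>v b"] dag_dag[OF Uc] Uc b by simp
  also have "\<dots> = cinner a b"
    using Uc b UU dag_carrier[OF Uc] by (simp add: assoc_mult_mat_vec[symmetric, of _ d d _ d])
  finally show ?thesis .
qed


definition ph :: "real \<Rightarrow> nat \<Rightarrow> complex" where
  "ph a i = (if even i then 1 else cis a)"

lemma pow_k: "k \<ge> 1 \<Longrightarrow> (2::nat)^(k-1) * 2 = 2^k"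
  by (cases k) auto

lemma Aphase_carrier: "k \<ge> 1 \<Longrightarrow> Aphase k a \<in> carrier_mat (2^k) (2^k)"
  unfolding Aphase_def kron_def Pgate_def using pow_k by simp

lemma Aphase_entry: assumes k: "k \<ge> 1" and i: "i < 2^k" and j: "j < 2^k"
  shows "Aphase k a $$ (i,j) = (if i = j then ph a i else 0)"
proof -
  have i2: "i div 2 < 2^(k-1)" "j div 2 < 2^(k-1)" using i j pow_k[OF k]
    by (metis less_mult_imp_div_less)+
  have eq: "(i div 2 = j div 2 \<and> i mod 2 = j mod 2) \<longleftrightarrow> i = j"
    by (metis div_mult_mod_eq)
  have m2: "i mod 2 < 2" "j mod 2 < 2" by auto
  show ?thesis
    unfolding Aphase_def kron_def Pgate_def using i j i2 m2 pow_k[OF k]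
    by (auto simp: ph_def eq[symmetric] even_iff_mod_2_eq_zero)
qed

lemma Aphase_mv: assumes k: "k \<ge> 1" and v: "v \<in> carrier_vec (2^k)"
  shows "Aphase k a *\<^sub>v v = vec (2^k) (\<lambda>i. ph a i * v $ i)"
proof (rule eq_vecI)
  fix i assume "i < dim_vec (vec (2^k) (\<lambda>i. ph a i * v $ i))"
  then have i: "i < 2^k" by simp
  have "(Aphase k a *\<^sub>v v) $ i = (\<Sum>j<2^k. Aphase k a $$ (i,j) * v $ j)"
    by (rule mv_index[OF Aphase_carrier[OF k] v i])
  also have "\<dots> = (\<Sum>j<2^k. if j = i then ph a i * v $ j else 0)"
    by (rule sum.cong) (auto simp: Aphase_entry[OF k i])
  also have "\<dots> = ph a i * v $ i" using i by simp
  finally show "(Aphase k a *\<^sub>v v) $ i = vec (2^k) (\<lambda>i. ph a i * v $ i) $ i" using i by simp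
qed (use Aphase_carrier[OF k, of a] in simp)

lemma cmod_ph: "cmod (ph a i) = 1" by (simp add: ph_def)

lemma Aphase_unit: assumes k: "k \<ge> 1" and v: "v \<in> carrier_vec (2^k)"
  shows "cinner (Aphase k a *\<^sub>v v) (Aphase k a *\<^sub>v v) = cinner v v"
proof -
  have "\<And>i. cnj (ph a i) * ph a i = 1"
    by (simp add: ph_def cis_cnj cis_mult)
  then show ?thesis unfolding Aphase_mv[OF k v] cinner_def using v
    by (auto intro!: sum.cong simp: algebra_simps)
qed

lemma overlap_ineq:
  fixes q0 q1 c a :: real
  assumes q: "q0 \<ge> 0" "q1 \<ge> 0" "q0 + q1 = 1" and c: "0 \<le> c" and ca: "cos a = 2*c^2 - 1"
  shows "c \<le> cmod (complex_of_real q0 + complex_of_real q1 * cis a)"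
proof -
  have s: "(sin a)\<^sup>2 = 1 - (cos a)\<^sup>2" using sin_cos_squared_add[of a] by linarith
  have "(cmod (complex_of_real q0 + complex_of_real q1 * cis a))\<^sup>2 = (q0 + q1 * cos a)\<^sup>2 + (q1 * sin a)\<^sup>2"
    by (simp add: cmod_power2)
  also have "\<dots> = c\<^sup>2 + (1 - c\<^sup>2) * (q0 - q1)\<^sup>2"
  proof -
    have q1e: "q1 = 1 - q0" using q by simp
    show ?thesis unfolding power_mult_distrib s ca q1e
      by (simp add: power2_eq_square algebra_simps)
  qed
  also have "\<dots> \<ge> c\<^sup>2"
  proof -
    have "cos a \<le> 1" by simp
    then have "c\<^sup>2 \<le> 1" using ca by simp
    then show ?thesis by simp
  qed
  finally have "c\<^sup>2 \<le> (cmod (complex_of_real q0 + complex_of_real q1 * cis a))\<^sup>2" by simp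
  then show ?thesis by (rule power2_le_imp_le) simp
qed

lemma zcnj_sq: "z * cnj z = (complex_of_real (cmod z))\<^sup>2" "cnj z * z = (complex_of_real (cmod z))\<^sup>2"
  using complex_norm_square[of z] by (simp_all add: mult.commute)

lemma phase_overlap:
  assumes k: "k \<ge> 1" and v: "v \<in> carrier_vec (2^k)" and vv: "cinner v v = 1"
    and c: "0 \<le> c" and ca: "cos a = 2*c^2 - 1"
  shows "c \<le> cmod (cinner v (Aphase k a *\<^sub>v v))"
proof -
  define w where "w i = (cmod (v $ i))\<^sup>2" for i
  define q0 where "q0 = (\<Sum>i<2^k. if even i then w i else 0)"
  define q1 where "q1 = (\<Sum>i<2^k. if even i then 0 else w i)"
  have "cinner v (Aphase k a *\<^sub>v v) = (\<Sum>i<2^k. complex_of_real (w i) * ph a i)"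
    unfolding Aphase_mv[OF k v] cinner_def w_def using v
    by (auto intro!: sum.cong simp: zcnj_sq mult.assoc[symmetric])
  also have "\<dots> = (\<Sum>i<2^k. complex_of_real (if even i then w i else 0) + complex_of_real (if even i then 0 else w i) * cis a)"
    by (rule sum.cong) (auto simp: ph_def)
  also have "\<dots> = complex_of_real q0 + complex_of_real q1 * cis a"
    unfolding q0_def q1_def by (simp add: sum.distrib sum_distrib_right)
  finally have eq: "cinner v (Aphase k a *\<^sub>v v) = complex_of_real q0 + complex_of_real q1 * cis a" .
  have "complex_of_real (\<Sum>i<2^k. w i) = 1" using vv v unfolding w_def by (simp add: cinner_self)
  then have sw: "(\<Sum>i<2^k. w i) = 1" using of_real_eq_1_iff by blast
  have "q0 + q1 = (\<Sum>i<2^k. w i)" unfolding q0_def q1_def by (simp add: sum.distrib[symmetric]; intro sum.cong; simp)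
  then have q01: "q0 + q1 = 1" using sw by simp
  have "q0 \<ge> 0" "q1 \<ge> 0" unfolding q0_def q1_def w_def by (auto intro!: sum_nonneg)
  then show ?thesis unfolding eq using overlap_ineq q01 c ca by blast
qed


lemma qf_lin:
  assumes M: "M \<in> carrier_mat n n" and h: "dag M = M" and a: "a \<in> carrier_vec n" and b: "b \<in> carrier_vec n"
  shows "Re (qf M (complex_of_real s \<cdot>\<^sub>v a + complex_of_real t \<cdot>\<^sub>v b)) =
     s\<^sup>2 * Re (qf M a) + t\<^sup>2 * Re (qf M b) + 2 * s * t * Re (cinner a (M *\<^sub>v b))"
proof -
  have ba: "cinner b (M *\<^sub>v a) = cnj (cinner a (M *\<^sub>v b))"
    using adjoint[OF M b a] h cinner_swap[OF a, of "M *\<^sub>v b"] M b by simp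
  have "qf M (complex_of_real s \<cdot>\<^sub>v a + complex_of_real t \<cdot>\<^sub>v b) =
     complex_of_real (s*s) * qf M a + complex_of_real (t*t) * qf M b +
     complex_of_real (s*t) * (cinner a (M *\<^sub>v b) + cinner b (M *\<^sub>v a))"
    unfolding qf_def using M a b
    by (simp add: mult_add_distrib_mat_vec[of _ n n] mult_mat_vec cinner_add_left[of _ n] cinner_add_right[of _ n]
        cinner_smult_left[of _ n] cinner_smult_right[of _ n] algebra_simps)
  then show ?thesis unfolding ba by (simp add: power2_eq_square)
qed

lemma qf_split:
  assumes M: "psd n M" and a: "a \<in> carrier_vec n" and b: "b \<in> carrier_vec n"
  shows "Re (qf M (a + b)) \<le> 4 * Re (qf M a) + 4/3 * Re (qf M b)"
proof -
  have Mc: "M \<in> carrier_mat n n" and h: "dag M = M" using M by (auto simp: psd_def)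
  have e1: "a + b = complex_of_real 1 \<cdot>\<^sub>v a + complex_of_real 1 \<cdot>\<^sub>v b" using a b by (intro eq_vecI) auto
  have e2c: "complex_of_real 3 \<cdot>\<^sub>v a + complex_of_real (-1) \<cdot>\<^sub>v b \<in> carrier_vec n" using a b by simp
  have "Re (qf M (complex_of_real 3 \<cdot>\<^sub>v a + complex_of_real (-1) \<cdot>\<^sub>v b)) \<ge> 0"
    using M e2c by (auto simp: psd_def qf_def)
  then have "9 * Re (qf M a) + Re (qf M b) - 6 * Re (cinner a (M *\<^sub>v b)) \<ge> 0"
    unfolding qf_lin[OF Mc h a b] by simp
  moreover have "Re (qf M (a + b)) = Re (qf M a) + Re (qf M b) + 2 * Re (cinner a (M *\<^sub>v b))"
    unfolding e1 qf_lin[OF Mc h a b] by simp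
  ultimately show ?thesis by linarith
qed

lemma qf_smult: assumes M: "M \<in> carrier_mat n n" and v: "v \<in> carrier_vec n"
  shows "qf M (w \<cdot>\<^sub>v v) = cnj w * w * qf M v"
  unfolding qf_def using M v by (simp add: mult_mat_vec cinner_smult_left[of _ n] cinner_smult_right[of _ n])

lemma qf_one_minus: assumes M: "M \<in> carrier_mat n n" and v: "v \<in> carrier_vec n"
  shows "qf (1\<^sub>m n - M) v = cinner v v - qf M v"
  unfolding qf_def using M v
  by (simp add: minus_mult_distrib_mat_vec[OF one_carrier_mat M v] cinner_minus_right[of _ n])

lemma eff_bound:
  assumes eff: "effect n \<mu>" and P: "P \<in> carrier_vec n" and F: "F \<in> carrier_vec n"
    and PP: "cinner P P = 1" and FF: "cinner F F = 1"
  shows "1 - Re (qf \<mu> F) \<le> 4 * (1 - Re (qf \<mu> P)) + 8/3 * (1 - cmod (cinner P F))"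
proof -
  define M where "M = 1\<^sub>m n - \<mu>"
  have mu: "psd n \<mu>" and Mp: "psd n M" using eff by (auto simp: effect_def M_def)
  have muc: "\<mu> \<in> carrier_mat n n" using mu by (auto simp: psd_def)
  define z where "z = cinner P F"
  define w where "w = (if z = 0 then 1 else cnj z / complex_of_real (cmod z))"
  have zz: "z * cnj z = complex_of_real (cmod z) * complex_of_real (cmod z)"
    by (simp add: zcnj_sq power2_eq_square)
  have ww: "cnj w * w = 1"
  proof (cases "z = 0")
    case False
    then have "cnj w * w = (z * cnj z) / (complex_of_real (cmod z) * complex_of_real (cmod z))"
      unfolding w_def by simp
    then show ?thesis unfolding zz using False by simp
  qed (simp add: w_def)
  have wz: "w * z = complex_of_real (cmod z)"
  proof (cases "z = 0")
    case False
    then have "w * z = (z * cnj z) / complex_of_real (cmod z)"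
      unfolding w_def by (simp add: mult.commute)
    then show ?thesis unfolding zz using False by simp
  qed (simp add: w_def)
  define F' where "F' = w \<cdot>\<^sub>v F"
  have F'c: "F' \<in> carrier_vec n" using F by (simp add: F'_def)
  have F'F': "cinner F' F' = 1" unfolding F'_def using F FF ww
    by (simp add: cinner_smult_left[of _ n] cinner_smult_right[of _ n] mult.assoc[symmetric] mult.commute[of w])
  have qfF': "qf \<mu> F' = qf \<mu> F" unfolding F'_def using qf_smult[OF muc F] ww by simp
  define D where "D = F' - P"
  have Dc: "D \<in> carrier_vec n" using F'c P by (simp add: D_def)
  have FPD: "F' = P + D" unfolding D_def using F'c P by (intro eq_vecI) auto
  have "Re (qf M F') \<le> 4 * Re (qf M P) + 4/3 * Re (qf M D)"
    unfolding FPD by (rule qf_split[OF Mp P Dc])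
  moreover have "Re (qf M F') = 1 - Re (qf \<mu> F)"
    unfolding M_def qf_one_minus[OF muc F'c] F'F' qfF' by simp
  moreover have "Re (qf M P) = 1 - Re (qf \<mu> P)"
    unfolding M_def qf_one_minus[OF muc P] PP by simp
  moreover have "Re (qf M D) \<le> 2 - 2 * cmod z"
  proof -
    have "Re (qf \<mu> D) \<ge> 0" using mu Dc by (auto simp: psd_def qf_def)
    moreover have "Re (qf M D) = Re (cinner D D) - Re (qf \<mu> D)"
      unfolding M_def qf_one_minus[OF muc Dc] by simp
    moreover have "Re (cinner D D) = 2 - 2 * cmod z"
    proof -
      have PF': "cinner P F' = complex_of_real (cmod z)"
        unfolding F'_def z_def using P F wz[unfolded z_def] by (simp add: cinner_smult_right[of _ n] mult.commute)
      have F'P: "cinner F' P = complex_of_real (cmod z)"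
        using cinner_swap[OF P F'c] PF' by simp
      have "cinner D D = cinner F' F' - cinner F' P - cinner P F' + cinner P P"
        unfolding D_def using F'c P by (simp add: cinner_minus_left[of _ n] cinner_minus_right[of _ n])
      then show ?thesis unfolding F'F' PP PF' F'P by simp
    qed
    ultimately show ?thesis by linarith
  qed
  ultimately have h: "Re (qf M F') \<le> 4 * Re (qf M P) + 4/3 * Re (qf M D)" "Re (qf M F') = 1 - Re (qf \<mu> F)"
     "Re (qf M P) = 1 - Re (qf \<mu> P)" "Re (qf M D) \<le> 2 - 2 * cmod z" by blast+
  have "4/3 * Re (qf M D) \<le> 4/3 * (2 - 2 * cmod z)" using h(4) by simp
  then have "Re (qf M F') \<le> 4 * Re (qf M P) + 4/3 * (2 - 2 * cmod z)" using h(1) by linarith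
  then have "1 - Re (qf \<mu> F) \<le> 4 * (1 - Re (qf \<mu> P)) + 4/3 * (2 - 2 * cmod z)" using h(2,3) by simp
  then show ?thesis unfolding z_def by simp
qed

lemma eff_range:
  assumes eff: "effect n \<mu>" and F: "F \<in> carrier_vec n" and FF: "cinner F F = 1"
  shows "0 \<le> Re (qf \<mu> F)" "Re (qf \<mu> F) \<le> 1"
proof -
  have mu: "psd n \<mu>" and Mp: "psd n (1\<^sub>m n - \<mu>)" using eff by (auto simp: effect_def)
  have muc: "\<mu> \<in> carrier_mat n n" using mu by (auto simp: psd_def)
  show "0 \<le> Re (qf \<mu> F)" using mu F by (auto simp: psd_def qf_def)
  have "0 \<le> Re (qf (1\<^sub>m n - \<mu>) F)" using Mp F by (auto simp: psd_def qf_def)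
  then show "Re (qf \<mu> F) \<le> 1" unfolding qf_one_minus[OF muc F] FF by simp
qed


lemma map2_map_same: "map2 f (map g L) (map h L) = map (\<lambda>i. f (g i) (h i)) L"
  by (induction L) auto

lemma list_all2_dims: "\<forall>i\<in>set L. dim_vec (g i) = d \<and> dim_vec (h i) = d \<Longrightarrow>
   list_all2 (\<lambda>a b. dim_vec a = dim_vec b) (map g L) (map h L)"
  by (induction L) auto

lemma prod_list_cmod_ge: "c \<ge> 0 \<Longrightarrow> \<forall>i\<in>set L. c \<le> cmod (f i) \<Longrightarrow> c ^ length L \<le> cmod (prod_list (map f L))"
proof (induction L)
  case (Cons x L)
  then have "c * c ^ length L \<le> cmod (f x) * cmod (prod_list (map f L))"
    by (intro mult_mono) auto
  then show ?case by (simp add: norm_mult)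
qed simp

lemma prod_list_one: "\<forall>i\<in>set L. f i = 1 \<Longrightarrow> prod_list (map f L) = 1"
  by (induction L) auto

lemma bernoulli_le: fixes c :: real assumes "0 \<le> c" "c \<le> 1" shows "1 - c ^ n \<le> real n * (1 - c)"
proof (induction n)
  case (Suc n)
  have "c ^ n \<le> 1" using assms by (simp add: power_le_one)
  then have "c ^ n * (1 - c) \<le> 1 - c" using assms by (simp add: mult_left_le_one_le)
  then show ?case using Suc by (simp add: algebra_simps)
qed simp

lemma vkl_carrier: "\<forall>i\<in>set L. dim_vec (g i) = d \<Longrightarrow> vkl (map g L) \<in> carrier_vec (d ^ length L)"
  by (rule carrier_vecI) (simp only: dim_vkl prod_dims)

lemma pair_bound:
  assumes k: "k \<ge> 1" and l: "l \<in> {1..n+1}"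
    and T: "\<forall>i\<in>{1..n+1}. is_unitary (2^k) (T i)"
    and x: "\<forall>i\<in>{1..n+1}. is_unit_vec (2^k) (x i)"
    and mu: "effect ((2^k)^n) \<mu>"
    and c: "0 \<le> c" "c \<le> 1" and ca: "cos a = 2*c^2 - 1"
  shows "accept_prob \<mu> (\<lambda>i. attacked k before a (T i)) x n l \<ge>
           4 * accept_prob \<mu> T x n l - 3 - 8/3 * real n * (1 - c)"
    and "0 \<le> accept_prob \<mu> T x n l" "accept_prob \<mu> T x n l \<le> 1"
    and "0 \<le> accept_prob \<mu> (\<lambda>i. attacked k before a (T i)) x n l"
    and "accept_prob \<mu> (\<lambda>i. attacked k before a (T i)) x n l \<le> 1"
proof -
  define d where "d = (2::nat)^k"
  define A where "A = Aphase k a"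
  have Ac: "A \<in> carrier_mat d d" using Aphase_carrier[OF k] by (simp add: A_def d_def)
  define T' where "T' = (\<lambda>i. attacked k before a (T i))"
  define L where "L = filter (\<lambda>i. i \<noteq> l) [1..<n+2]"
  have sL: "set L \<subseteq> {1..n+1}" by (auto simp: L_def)
  have lenL: "length L = n" unfolding L_def by (rule length_filter_ne[OF l])
  have Tc: "\<forall>i\<in>{1..n+1}. T i \<in> carrier_mat d d" using T by (auto simp: is_unitary_def d_def)
  have xc: "\<forall>i\<in>{1..n+1}. x i \<in> carrier_vec d" using x by (auto simp: is_unit_vec_def d_def)
  have T'c: "\<forall>i\<in>{1..n+1}. T' i \<in> carrier_mat d d"
    using Tc Ac by (auto simp: T'_def attacked_def A_def)
  have muc: "\<mu> \<in> carrier_mat (d^n) (d^n)" using mu by (auto simp: effect_def psd_def d_def)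
  define \<psi> where "\<psi> i = T i *\<^sub>v x i" for i
  define \<phi> where "\<phi> i = T' i *\<^sub>v x i" for i
  have props: "\<psi> i \<in> carrier_vec d \<and> \<phi> i \<in> carrier_vec d \<and> cinner (\<psi> i) (\<psi> i) = 1 \<and>
      cinner (\<phi> i) (\<phi> i) = 1 \<and> c \<le> cmod (cinner (\<psi> i) (\<phi> i))" if i: "i \<in> {1..n+1}" for i
  proof -
    have Ti: "is_unitary d (T i)" and Tic: "T i \<in> carrier_mat d d" using T Tc i by (auto simp: d_def)
    have xi: "x i \<in> carrier_vec d" "cinner (x i) (x i) = 1" using x i by (auto simp: is_unit_vec_def d_def)
    have Axc: "A *\<^sub>v x i \<in> carrier_vec d" using Ac xi by simp
    have kd: "d = 2^k" by (simp add: d_def)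
    have psc: "\<psi> i \<in> carrier_vec d" using Tic xi by (simp add: \<psi>_def)
    have psu: "cinner (\<psi> i) (\<psi> i) = 1" unfolding \<psi>_def using unitary_cinner[OF Ti xi(1) xi(1)] xi by simp
    show ?thesis
    proof (cases before)
      case True
      then have ph: "\<phi> i = T i *\<^sub>v (A *\<^sub>v x i)"
        unfolding \<phi>_def T'_def attacked_def A_def[symmetric] using Tic Ac xi by (simp add: assoc_mult_mat_vec[of _ d d _ d])
      have "cinner (\<phi> i) (\<phi> i) = cinner (A *\<^sub>v x i) (A *\<^sub>v x i)"
        unfolding ph by (rule unitary_cinner[OF Ti Axc Axc])
      also have "\<dots> = 1" using Aphase_unit[OF k, of "x i" a] xi unfolding A_def kd by simp
      finally have phu: "cinner (\<phi> i) (\<phi> i) = 1" .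
      have "cinner (\<psi> i) (\<phi> i) = cinner (x i) (A *\<^sub>v x i)"
        unfolding ph \<psi>_def by (rule unitary_cinner[OF Ti xi(1) Axc])
      then have "c \<le> cmod (cinner (\<psi> i) (\<phi> i))"
        using phase_overlap[OF k _ _ c(1) ca, of "x i"] xi unfolding A_def kd by simp
      then show ?thesis using psc phu psu Tic Axc ph by simp
    next
      case False
      then have ph: "\<phi> i = A *\<^sub>v \<psi> i"
        unfolding \<phi>_def \<psi>_def T'_def attacked_def A_def[symmetric] using Tic Ac xi by (simp add: assoc_mult_mat_vec[of _ d d _ d])
      have phu: "cinner (\<phi> i) (\<phi> i) = 1" unfolding ph using Aphase_unit[OF k, of "\<psi> i" a] psc psu
        unfolding A_def kd by simp
      have "c \<le> cmod (cinner (\<psi> i) (\<phi> i))"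
        unfolding ph using phase_overlap[OF k _ psu c(1) ca] psc unfolding A_def kd by simp
      then show ?thesis using psc phu psu Ac ph by simp
    qed
  qed
  have pL: "\<psi> i \<in> carrier_vec d \<and> \<phi> i \<in> carrier_vec d \<and> cinner (\<psi> i) (\<psi> i) = 1 \<and>
      cinner (\<phi> i) (\<phi> i) = 1 \<and> c \<le> cmod (cinner (\<psi> i) (\<phi> i))" if "i \<in> set L" for i
    using props sL that by blast
  define P where "P = vkl (map \<psi> L)"
  define F where "F = vkl (map \<phi> L)"
  have Pc: "P \<in> carrier_vec (d^n)" unfolding P_def lenL[symmetric]
    by (rule vkl_carrier) (use props sL in auto)
  have Fc: "F \<in> carrier_vec (d^n)" unfolding F_def lenL[symmetric]
    by (rule vkl_carrier) (use props sL in auto)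
  have dims: "list_all2 (\<lambda>a b. dim_vec a = dim_vec b) (map g L) (map h L)"
    if "g = \<psi> \<or> g = \<phi>" "h = \<psi> \<or> h = \<phi>" for g h
    by (rule list_all2_dims[where d=d]) (use props sL that in auto)
  have PP: "cinner P P = 1" unfolding P_def
    by (subst cinner_vkl[OF dims]) (auto simp: map2_map_same intro!: prod_list_one dest!: pL)
  have FF: "cinner F F = 1" unfolding F_def
    by (subst cinner_vkl[OF dims]) (auto simp: map2_map_same intro!: prod_list_one dest!: pL)
  have PF: "c ^ n \<le> cmod (cinner P F)" unfolding P_def F_def lenL[symmetric]
    by (subst cinner_vkl[OF dims]) (auto simp: map2_map_same intro!: prod_list_cmod_ge c dest!: pL)
  have effd: "effect (d^n) \<mu>" using mu by (simp add: d_def)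
  have apH: "accept_prob \<mu> T x n l = Re (qf \<mu> P)"
    unfolding P_def L_def \<psi>_def by (rule accept_prob_eq[OF l Tc xc muc])
  have apD: "accept_prob \<mu> T' x n l = Re (qf \<mu> F)"
    unfolding F_def L_def \<phi>_def by (rule accept_prob_eq[OF l T'c xc muc])
  have "1 - Re (qf \<mu> F) \<le> 4 * (1 - Re (qf \<mu> P)) + 8/3 * (1 - cmod (cinner P F))"
    by (rule eff_bound[OF effd Pc Fc PP FF])
  moreover have "1 - cmod (cinner P F) \<le> real n * (1 - c)"
    using bernoulli_le[OF c, of n] PF by linarith
  moreover have gen: "\<And>(u::real) (v::real) (w::real) (r::real). 1 - u \<le> 4*(1-v) + 8/3*(1-w) \<Longrightarrow> 1 - w \<le> r \<Longrightarrow> 1 - u \<le> 4*(1-v) + 8/3*r"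
    by (simp add: field_simps)
  ultimately have "1 - Re (qf \<mu> F) \<le> 4 * (1 - Re (qf \<mu> P)) + 8/3 * (real n * (1 - c))" by blast
  then show "accept_prob \<mu> (\<lambda>i. attacked k before a (T i)) x n l \<ge>
           4 * accept_prob \<mu> T x n l - 3 - 8/3 * real n * (1 - c)"
    unfolding T'_def[symmetric] apH apD by (simp add: mult.assoc)
  show "0 \<le> accept_prob \<mu> T x n l" "accept_prob \<mu> T x n l \<le> 1"
    unfolding apH using eff_range[OF effd Pc PP] by auto
  show "0 \<le> accept_prob \<mu> (\<lambda>i. attacked k before a (T i)) x n l"
     "accept_prob \<mu> (\<lambda>i. attacked k before a (T i)) x n l \<le> 1"
    unfolding T'_def[symmetric] apD using eff_range[OF effd Fc FF] by auto
qed


lemma final_arith: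
  fixes N e D pD x :: real
  assumes N: "N \<ge> 1" and e: "e \<ge> 0" and D: "D \<ge> 0" and pD: "pD \<ge> 4*(1-e) - 3 - 2/5"
    and x: "x = 3/(20*N)" and Dp: "D \<ge> pD * (x*(2-x))"
  shows "e + D \<ge> 1/(7*N)"
proof (cases "e \<ge> 1/(7*N)")
  case True then show ?thesis using D by simp
next
  case False
  define y where "y = 1/N"
  have y: "0 < y" "y \<le> 1" using N by (auto simp: y_def)
  have ey: "7*e < y" using False N by (simp add: y_def field_simps)
  have xy: "x = 3/20*y" using x by (simp add: y_def)
  have L: "pD \<ge> 3/5 - 4*e" using pD by simp
  have L0: "3/5 - 4*e \<ge> 0" using ey y by simp
  have x0: "x \<ge> 0" "x \<le> 3/20" using xy y by auto
  have "pD * (x*(2-x)) \<ge> (3/5 - 4*e) * (x*(2-x))"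
    using L x0 by (intro mult_right_mono) auto
  moreover have "(3/5 - 4*e) * (x*(2-x)) \<ge> (3/5 - 4*e) * (x*(37/20))"
    using L0 x0 by (intro mult_left_mono) (auto intro: mult_left_mono)
  ultimately have "D \<ge> (3/5 - 4*e) * (x*(37/20))" using Dp by linarith
  then have D2: "D \<ge> 333/2000*y - 111/100 * (e*y)" unfolding xy by (simp add: algebra_simps)
  have eyy: "e*y \<le> e" using e y by (simp add: mult_left_le)
  have D3: "2000*D \<ge> 333*y - 2220*(e*y)" using D2 by simp
  have gen: "\<And>z::real. 333*y - 2220*z \<le> 2000*D \<Longrightarrow> z \<le> e \<Longrightarrow> y \<le> 7*(e + D)"
    using ey e by smt
  have "y \<le> 7*(e + D)" using gen[OF D3 eyy] .
  then show ?thesis by (simp add: y_def field_simps)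
qed

lemma cs2: fixes A B X Y :: real shows "(A*X + B*Y)\<^sup>2 \<le> (A\<^sup>2 + B\<^sup>2) * (X\<^sup>2 + Y\<^sup>2)"
proof -
  have "(A\<^sup>2 + B\<^sup>2) * (X\<^sup>2 + Y\<^sup>2) - (A*X + B*Y)\<^sup>2 = (A*Y - B*X)\<^sup>2"
    by (simp add: power2_eq_square algebra_simps)
  moreover have "(A*Y - B*X)\<^sup>2 \<ge> 0" by simp
  ultimately show ?thesis by linarith
qed

lemma fid_upper: fixes q p s :: real
  assumes "0 \<le> q" "q \<le> 1" "0 \<le> p" "p \<le> 1" "0 \<le> s"
  shows "(sqrt (q*p) * s + sqrt ((1-q)*(1-p)))\<^sup>2 \<le> q * s\<^sup>2 + (1 - q)"
proof -
  have "(sqrt (q*p) * s + sqrt ((1-q)*(1-p)))\<^sup>2 = ((sqrt q * s) * sqrt p + sqrt (1-q) * sqrt (1-p))\<^sup>2"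
  proof -
    have "sqrt (q*p) = sqrt q * sqrt p" "sqrt ((1-q)*(1-p)) = sqrt (1-q) * sqrt (1-p)"
      by (simp_all only: real_sqrt_mult)
    then show ?thesis by (simp add: ac_simps)
  qed
  also have "\<dots> \<le> ((sqrt q * s)\<^sup>2 + (sqrt (1-q))\<^sup>2) * ((sqrt p)\<^sup>2 + (sqrt (1-p))\<^sup>2)" by (rule cs2)
  also have "\<dots> = q * s\<^sup>2 + (1 - q)" using assms by (simp add: power_mult_distrib)
  finally show ?thesis .
qed

lemma avg_props:
  fixes \<Omega> :: "nat \<Rightarrow> real" and f :: "nat \<Rightarrow> nat \<Rightarrow> real"
  assumes \<Omega>0: "\<forall>n. \<Omega> n \<ge> 0" and \<Omega>1: "\<Omega> sums 1"
    and f: "\<And>n l. l \<in> {1..n+1} \<Longrightarrow> 0 \<le> f n l \<and> f n l \<le> 1"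
  defines "g \<equiv> \<lambda>n. \<Omega> n / real (n+1) * (\<Sum>l\<in>{1..n+1}. f n l)"
  shows "\<And>n. 0 \<le> g n" "\<And>n. g n \<le> \<Omega> n" "summable g" "0 \<le> suminf g" "suminf g \<le> 1"
proof -
  show g0: "0 \<le> g n" for n
  proof -
    have "0 \<le> (\<Sum>l\<in>{1..n+1}. f n l)" by (rule sum_nonneg) (use f in auto)
    then show ?thesis unfolding g_def using \<Omega>0 by simp
  qed
  show g1: "g n \<le> \<Omega> n" for n
  proof -
    have "(\<Sum>l\<in>{1..n+1}. f n l) \<le> of_nat (card {1..n+1}) * 1"
      by (rule sum_bounded_above) (use f in auto)
    then have S: "(\<Sum>l\<in>{1..n+1}. f n l) \<le> real (n+1)" by simp
    have "g n \<le> \<Omega> n / real (n+1) * real (n+1)"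
      unfolding g_def using S \<Omega>0 by (intro mult_left_mono) auto
    then show ?thesis by simp
  qed
  have sO: "summable \<Omega>" using \<Omega>1 by (rule sums_summable)
  show sg: "summable g"
    by (rule summable_comparison_test[OF _ sO]) (use g0 g1 in auto)
  show "0 \<le> suminf g" using g0 sg by (simp add: suminf_nonneg)
  have "suminf g \<le> suminf \<Omega>" by (rule suminf_le) (use g1 sg sO in auto)
  then show "suminf g \<le> 1" using sums_unique[OF \<Omega>1] by simp
qed

theorem theorem1:
  fixes k :: nat and \<Omega> :: "nat \<Rightarrow> real" and N :: real
    and T :: "nat \<Rightarrow> nat \<Rightarrow> complex mat" and \<chi> :: "nat \<Rightarrow> nat \<Rightarrow> complex vec"
    and \<mu> :: "nat \<Rightarrow> complex mat" and before :: bool and \<epsilon>H \<epsilon>D :: real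
  assumes k: "k \<ge> 1"
    and \<Omega>_nonneg: "\<forall>n. \<Omega> n \<ge> 0"
    and \<Omega>_sum: "\<Omega> sums 1"
    and N_mean: "(\<lambda>n. real n * \<Omega> n) sums N"
    and N_ge: "N \<ge> 1"
    and T_unitary: "\<forall>n. \<forall>i\<in>{1..n+1}. is_unitary (2^k) (T n i)"
    and \<chi>_unit: "\<forall>n. \<forall>i\<in>{1..n+1}. is_unit_vec (2^k) (\<chi> n i)"
    and \<mu>_effect: "\<forall>n. effect ((2^k)^n) (\<mu> n)"
    and eps_nonneg: "\<epsilon>H \<ge> 0" "\<epsilon>D \<ge> 0"
    and correct: "fidelity (mix_bot k (avg_accept \<Omega> \<mu> T \<chi>) (plus_k k))
                           (ext_state k (plus_k k)) \<ge> 1 - \<epsilon>H"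
    and secure: "\<forall>\<alpha>::real. \<exists>p\<in>{0..1::real}.
         fidelity (mix_bot k (avg_accept \<Omega> \<mu> (\<lambda>n i. attacked k before \<alpha> (T n i)) \<chi>) (plus_k_alpha k \<alpha>))
                  (mix_bot k p (plus_k k)) \<ge> 1 - \<epsilon>D"
  shows "\<epsilon>H + \<epsilon>D \<ge> 1 / (7 * N)"
proof -
  define c where "c = 1 - 3/(20*N)"
  have N0: "N > 0" using N_ge by simp
  have c01: "0 \<le> c" "c \<le> 1" using N_ge by (auto simp: c_def field_simps)
  define a where "a = 2 * arccos c"
  have ca: "cos a = 2*c^2 - 1"
    unfolding a_def cos_double_cos using c01 by (simp add: cos_arccos)
  define fH where "fH n l = accept_prob (\<mu> n) (T n) (\<chi> n) n l" for n l
  define fD where "fD n l = accept_prob (\<mu> n) (\<lambda>i. attacked k before a (T n i)) (\<chi> n) n l" for n l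
  have PB: "fD n l \<ge> 4 * fH n l - 3 - 8/3 * real n * (1-c) \<and> 0 \<le> fH n l \<and> fH n l \<le> 1 \<and> 0 \<le> fD n l \<and> fD n l \<le> 1"
    if l: "l \<in> {1..n+1}" for n l
  proof -
    have Tn: "\<forall>i\<in>{1..n+1}. is_unitary (2^k) (T n i)" using T_unitary by blast
    have xn: "\<forall>i\<in>{1..n+1}. is_unit_vec (2^k) (\<chi> n i)" using \<chi>_unit by blast
    have mn: "effect ((2^k)^n) (\<mu> n)" using \<mu>_effect by blast
    show ?thesis unfolding fH_def fD_def using pair_bound[OF k l Tn xn mn c01 ca] by blast
  qed
  define gH where "gH n = \<Omega> n / real (n+1) * (\<Sum>l\<in>{1..n+1}. fH n l)" for n
  define gD where "gD n = \<Omega> n / real (n+1) * (\<Sum>l\<in>{1..n+1}. fD n l)" for n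
  define pH where "pH = avg_accept \<Omega> \<mu> T \<chi>"
  define pD where "pD = avg_accept \<Omega> \<mu> (\<lambda>n i. attacked k before a (T n i)) \<chi>"
  have pHs: "pH = suminf gH" unfolding pH_def avg_accept_def gH_def fH_def ..
  have pDs: "pD = suminf gD" unfolding pD_def avg_accept_def gD_def fD_def ..
  have fHr: "\<And>n l. l \<in> {1..n+1} \<Longrightarrow> 0 \<le> fH n l \<and> fH n l \<le> 1" using PB by blast
  have fDr: "\<And>n l. l \<in> {1..n+1} \<Longrightarrow> 0 \<le> fD n l \<and> fD n l \<le> 1" using PB by blast
  have aH': "summable gH" "0 \<le> suminf gH" "suminf gH \<le> 1"
    unfolding gH_def[abs_def] using avg_props(3-5)[OF \<Omega>_nonneg \<Omega>_sum fHr] by auto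
  have aD': "summable gD" "0 \<le> suminf gD" "suminf gD \<le> 1"
    unfolding gD_def[abs_def] using avg_props(3-5)[OF \<Omega>_nonneg \<Omega>_sum fDr] by auto
  have gbound: "4 * gH n - 3 * \<Omega> n - 8/3*(1-c) * (real n * \<Omega> n) \<le> gD n" for n
  proof -
    define K where "K = 3 + 8/3 * real n * (1-c)"
    have "(\<Sum>l\<in>{1..n+1}. 4 * fH n l - K) \<le> (\<Sum>l\<in>{1..n+1}. fD n l)"
    proof (rule sum_mono)
      fix l assume "l \<in> {1..n+1}"
      then have "fD n l \<ge> 4 * fH n l - 3 - 8/3 * real n * (1-c)" using PB by blast
      then show "4 * fH n l - K \<le> fD n l" unfolding K_def by (simp add: diff_diff_eq)
    qed
    moreover have "(\<Sum>l\<in>{1..n+1}. 4 * fH n l - K) = 4 * (\<Sum>l\<in>{1..n+1}. fH n l) - real (n+1) * K"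
      by (simp add: sum_subtractf sum_distrib_left)
    ultimately have "\<Omega> n / real (n+1) * (4 * (\<Sum>l\<in>{1..n+1}. fH n l) - real (n+1) * K) \<le> gD n"
      unfolding gD_def using \<Omega>_nonneg by (intro mult_left_mono) auto
    moreover have "\<Omega> n / real (n+1) * (4 * (\<Sum>l\<in>{1..n+1}. fH n l) - real (n+1) * K) = 4 * gH n - \<Omega> n * K"
      unfolding gH_def by (simp add: field_simps)
    moreover have "\<Omega> n * K = 3 * \<Omega> n + 8/3*(1-c) * (real n * \<Omega> n)"
      unfolding K_def by (simp add: algebra_simps)
    ultimately show ?thesis by simp
  qed
  have sH: "gH sums pH" using aH'(1) pHs by (simp add: summable_sums)
  have sD: "gD sums pD" using aD'(1) pDs by (simp add: summable_sums)
  have sL: "(\<lambda>n. 4 * gH n - 3 * \<Omega> n - 8/3*(1-c) * (real n * \<Omega> n)) sums (4 * pH - 3 * 1 - 8/3*(1-c) * N)"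
    by (intro sums_diff sums_mult sH \<Omega>_sum N_mean)
  have pDb: "4 * pH - 3 * 1 - 8/3*(1-c) * N \<le> pD"
    by (rule sums_le[OF gbound sL sD])
  have cN: "8/3*(1-c) * N = 2/5" unfolding c_def using N0 by (simp add: field_simps)
  have pH01: "0 \<le> pH" "pH \<le> 1" using aH' pHs by auto
  have pD01: "0 \<le> pD" "pD \<le> 1" using aD' pDs by auto
  have "fidelity (mix_bot k pH (plus_k k)) (ext_state k (plus_k k)) = pH"
    unfolding plus_k_ketbra by (rule fid_correct[OF vplus_carrier vplus_unit pH01])
  then have pHe: "pH \<ge> 1 - \<epsilon>H" using correct unfolding pH_def by simp
  obtain p where p: "p \<in> {0..1}" and pf:
    "fidelity (mix_bot k pD (plus_k_alpha k a)) (mix_bot k p (plus_k k)) \<ge> 1 - \<epsilon>D"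
    using secure unfolding pD_def by blast
  have p01: "0 \<le> p" "p \<le> 1" using p by auto
  have "fidelity (mix_bot k pD (plus_k_alpha k a)) (mix_bot k p (plus_k k)) =
     (sqrt (pD*p) * cmod (cinner (wplus k a) (vplus k)) + sqrt ((1-pD)*(1-p)))\<^sup>2"
    unfolding plus_k_ketbra plus_k_alpha_ketbra
    by (rule fid_mix[OF vplus_carrier wplus_carrier[OF k] vplus_unit wplus_unit pD01 p01])
  also have "\<dots> \<le> pD * (cmod (cinner (wplus k a) (vplus k)))\<^sup>2 + (1 - pD)"
    by (rule fid_upper) (use pD01 p01 in auto)
  also have "(cmod (cinner (wplus k a) (vplus k)))\<^sup>2 = c\<^sup>2"
    using cmod_wv[OF k, of a] ca by simp
  finally have eD: "\<epsilon>D \<ge> pD * (1 - c\<^sup>2)" using pf by (simp add: algebra_simps)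
  define x where "x = 3/(20*N)"
  have "1 - c\<^sup>2 = x * (2 - x)" unfolding c_def x_def by (simp add: power2_eq_square algebra_simps)
  then have eD': "\<epsilon>D \<ge> pD * (x * (2 - x))" using eD by simp
  have pDb': "pD \<ge> 4*(1-\<epsilon>H) - 3 - 2/5" using pDb cN pHe by simp
  show ?thesis by (rule final_arith[OF N_ge eps_nonneg(1) eps_nonneg(2) pDb' x_def eD'])
qed


end
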